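(* There exists $c>0$ (depending only on the dimension $d$) such that for every Borel set $E\subset\mathbb{R}^d$ and every $0<\lambda<1$, $$\{x: M\chi_E(x)>\lambda\}\subseteq\big\{x: M\big(\chi_{\{M\chi_E>\lambda\}}\,M\chi_E\big)(x)>c\,\lambda(1-\log\lambda)\big\}.$$
   Context: $M$ denotes the Hardy–Littlewood maximal operator on $\mathbb{R}^d$: $Mf(x)=\sup_{Q\ni x}\frac{1}{|Q|}\int_Q|f(y)|\,dy$, the supremum over all cubes $Q$ containing $x$. *)

theory Defs
  imports "HOL-Analysis.Analysis"
begin

definition cubes :: "'a::euclidean_space set set" where
  "cubes = {cbox a (a + h *\<^sub>R One) | a h. h > 0}"

text \<open>Hardy--Littlewood maximal operator (over cubes containing the point),
  for nonnegative extended-real-valued functions (f plays the role of |f|).\<close>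
definition maximal_op :: "('a::euclidean_space \<Rightarrow> ennreal) \<Rightarrow> 'a \<Rightarrow> ennreal" where
  "maximal_op f x =
     (SUP Q \<in> {Q \<in> cubes. x \<in> Q}. (\<integral>\<^sup>+ y. f y * indicator Q y \<partial>lborel) / emeasure lborel Q)"

end

theory Submission
  imports Defs
begin
lemma emeasure_UN_countable_le:
  fixes X :: "'i \<Rightarrow> 'a::euclidean_space set"
  assumes sets: "\<And>i. i \<in> I \<Longrightarrow> X i \<in> sets borel" and I: "countable I"
  shows "emeasure lborel (\<Union>(X ` I)) \<le> (\<integral>\<^sup>+i. emeasure lborel (X i) \<partial>count_space I)"
proof -
  have m: "\<Union>(X ` I) \<in> sets borel" using sets I by (intro sets.countable_UN'') auto
  have "emeasure lborel (\<Union>(X ` I)) = (\<integral>\<^sup>+y. indicator (\<Union>(X ` I)) y \<partial>lborel)"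
    using m by simp
  also have "\<dots> \<le> (\<integral>\<^sup>+y. (\<integral>\<^sup>+i. indicator (X i) y \<partial>count_space I) \<partial>lborel)"
  proof (rule nn_integral_mono)
    fix y
    show "indicator (\<Union>(X ` I)) y \<le> (\<integral>\<^sup>+i. indicator (X i) y \<partial>count_space I)"
    proof (cases "y \<in> \<Union>(X ` I)")
      case True
      then obtain j where j: "j \<in> I" "y \<in> X j" by auto
      have "(1::ennreal) = (\<integral>\<^sup>+i. indicator {j} i \<partial>count_space I)"
        using j by (simp add: nn_integral_indicator_singleton)
      also have "\<dots> \<le> (\<integral>\<^sup>+i. indicator (X i) y \<partial>count_space I)"
        by (rule nn_integral_mono) (auto simp: indicator_def j)
      finally show ?thesis using True by simp
    qed simp
  qed
  also have "\<dots> = (\<integral>\<^sup>+i. (\<integral>\<^sup>+y. indicator (X i) y \<partial>lborel) \<partial>count_space I)"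
    using I sets by (intro nn_integral_count_space_nn_integral) auto
  also have "\<dots> = (\<integral>\<^sup>+i. emeasure lborel (X i) \<partial>count_space I)"
    using sets by (intro nn_integral_cong) simp
  finally show ?thesis .
qed

lemma density_half:
  fixes F :: "'a::euclidean_space set"
  assumes F: "F \<in> sets borel" "bounded F"
  defines "V \<equiv> \<Union>{ball c r | c r. 0 < r \<and> emeasure lborel (ball c r) < 2 * emeasure lborel (F \<inter> ball c r)}"
  shows "emeasure lborel (F - V) = 0"
proof (rule ccontr)
  let ?T = "F - V"
  assume ne: "emeasure lborel ?T \<noteq> 0"
  have oV: "open V" unfolding V_def by auto
  have Tb: "?T \<in> sets borel" using F oV by auto
  have "emeasure lborel ?T \<le> emeasure lborel F" using F by (intro emeasure_mono) auto
  also have "\<dots> < \<infinity>" using F(2) by (rule emeasure_bounded_finite)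
  finally have Tfin: "emeasure lborel ?T < \<infinity>" .
  define \<tau> where "\<tau> = measure lborel ?T"
  have Teq: "emeasure lborel ?T = ennreal \<tau>" unfolding \<tau>_def using Tfin by (simp add: emeasure_eq_ennreal_measure)
  have tnn: "\<tau> \<ge> 0" unfolding \<tau>_def by simp
  have tpos: "\<tau> > 0" using ne Teq tnn by (metis ennreal_0 order_neq_le_trans)
  obtain Op where Op: "open Op" "?T \<subseteq> Op" "emeasure lebesgue (Op - ?T) < ennreal \<tau>"
    using sets_lebesgue_outer_open[of ?T \<tau>] Tb tpos by auto
  have Ob: "Op \<in> sets borel" using Op by auto
  have OTb: "Op - ?T \<in> sets borel" using Ob Tb by auto
  have "emeasure lborel Op = emeasure lborel (?T \<union> (Op - ?T))" using Op(2) by (simp add: Un_absorb1)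
  also have "\<dots> = emeasure lborel ?T + emeasure lborel (Op - ?T)"
    using Tb OTb by (intro plus_emeasure[symmetric]) auto
  also have "emeasure lborel (Op - ?T) = emeasure lebesgue (Op - ?T)" using OTb by simp
  also have "emeasure lborel ?T + emeasure lebesgue (Op - ?T) < ennreal \<tau> + ennreal \<tau>"
    unfolding Teq using Op(3) by (simp add: ennreal_add_left_cancel_less)
  also have "ennreal \<tau> + ennreal \<tau> = 2 * ennreal \<tau>" by (simp add: mult_2)
  finally have Olt: "emeasure lborel Op < 2 * ennreal \<tau>" .
  define K where "K = {(c, r). 0 < r \<and> ball c r \<subseteq> Op}"
  have cover: "\<exists>i. i \<in> K \<and> x \<in> ball (fst i) (snd i) \<and> snd i < d" if "x \<in> ?T" "0 < d" for x d
  proof -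
    have "x \<in> Op" using Op(2) that(1) by (rule subsetD)
    then obtain e where e: "e > 0" "ball x e \<subseteq> Op" using open_contains_ball_eq[OF Op(1)] by blast
    have "ball x (min e (d/2)) \<subseteq> Op" using e(2) subset_ball[of "min e (d/2)" e x] by simp
    then have "(x, min e (d/2)) \<in> K" using e(1) that(2) by (simp add: K_def)
    moreover have "x \<in> ball x (min e (d/2))" using e(1) that(2) by simp
    moreover have "min e (d/2) < d" using that(2) by simp
    ultimately show ?thesis by (intro exI[of _ "(x, min e (d/2))"]) simp
  qed
  obtain C where C: "countable C" "C \<subseteq> K"
     "pairwise (\<lambda>i j. disjnt (ball (fst i) (snd i)) (ball (fst j) (snd j))) C"
     "negligible (?T - (\<Union>i \<in> C. ball (fst i) (snd i)))"
    using Vitali_covering_theorem_balls[of ?T K fst snd, OF cover] by blast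
  let ?B = "\<lambda>i. ball (fst i) (snd i)"
  have dj: "disjoint_family_on ?B C"
    using C(3) by (auto simp: disjoint_family_on_def pairwise_def disjnt_def)
  have dj2: "disjoint_family_on (\<lambda>i. ?T \<inter> ?B i) C"
    using dj unfolding disjoint_family_on_def by blast
  have oU: "open (\<Union>i \<in> C. ?B i)" by (intro open_UN) auto
  then have bU: "(\<Union>i \<in> C. ?B i) \<in> sets borel" by (rule borel_open)
  have N: "emeasure lborel (?T - (\<Union>i \<in> C. ?B i)) = 0"
  proof -
    have "?T - (\<Union>i \<in> C. ?B i) \<in> null_sets lebesgue" using C(4) negligible_iff_null_sets by blast
    moreover have "?T - (\<Union>i \<in> C. ?B i) \<in> sets borel" using Tb bU by (rule sets.Diff)
    ultimately have "?T - (\<Union>i \<in> C. ?B i) \<in> null_sets lborel" by (simp add: null_sets_completion_iff)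
    then show ?thesis by (rule null_setsD1)
  qed
  have "ennreal \<tau> = emeasure lborel ?T" using Teq by simp
  also have "\<dots> = emeasure lborel ((?T \<inter> (\<Union>i \<in> C. ?B i)) \<union> (?T - (\<Union>i \<in> C. ?B i)))"
    by (simp add: Int_Diff_Un)
  also have "\<dots> \<le> emeasure lborel (?T \<inter> (\<Union>i \<in> C. ?B i)) + emeasure lborel (?T - (\<Union>i \<in> C. ?B i))"
    using Tb bU by (intro emeasure_subadditive) auto
  also have "\<dots> = emeasure lborel (\<Union>i \<in> C. ?T \<inter> ?B i)" using N by simp
  also have "\<dots> = (\<integral>\<^sup>+i. emeasure lborel (?T \<inter> ?B i) \<partial>count_space C)"
    using C(1) dj2 Tb by (intro emeasure_UN_countable) auto
  finally have "2 * ennreal \<tau> \<le> 2 * (\<integral>\<^sup>+i. emeasure lborel (?T \<inter> ?B i) \<partial>count_space C)"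
    by (rule mult_left_mono) simp
  also have "\<dots> = (\<integral>\<^sup>+i. 2 * emeasure lborel (?T \<inter> ?B i) \<partial>count_space C)"
    by (simp add: nn_integral_cmult)
  also have "\<dots> \<le> (\<integral>\<^sup>+i. emeasure lborel (?B i) \<partial>count_space C)"
  proof (rule nn_integral_mono)
    fix i assume "i \<in> space (count_space C)"
    show "2 * emeasure lborel (?T \<inter> ?B i) \<le> emeasure lborel (?B i)"
    proof (cases "emeasure lborel (?B i) < 2 * emeasure lborel (F \<inter> ?B i)")
      case True
      have "snd i > 0" using \<open>i \<in> space (count_space C)\<close> C(2) by (auto simp: K_def)
      then have "?B i \<subseteq> V" using True unfolding V_def
        by (intro Union_upper) (auto intro!: exI[of _ "fst i"] exI[of _ "snd i"])
      then have "?T \<inter> ?B i = {}" by blast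
      then show ?thesis by simp
    next
      case False
      have "emeasure lborel (?T \<inter> ?B i) \<le> emeasure lborel (F \<inter> ?B i)"
        using F by (intro emeasure_mono) auto
      then have "2 * emeasure lborel (?T \<inter> ?B i) \<le> 2 * emeasure lborel (F \<inter> ?B i)"
        by (rule mult_left_mono) simp
      also have "\<dots> \<le> emeasure lborel (?B i)" using False by (simp add: not_less)
      finally show ?thesis .
    qed
  qed
  also have "(\<integral>\<^sup>+i. emeasure lborel (?B i) \<partial>count_space C) = emeasure lborel (\<Union>i \<in> C. ?B i)"
    using C(1) dj by (intro emeasure_UN_countable[symmetric]) auto
  also have "\<dots> \<le> emeasure lborel Op"
  proof -
    have "(\<Union>i \<in> C. ?B i) \<subseteq> Op" using C(2) unfolding K_def by fastforce
    then show ?thesis using Ob by (intro emeasure_mono) auto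
  qed
  also note Olt
  finally show False by simp
qed

lemma measure_ball_eq:
  assumes "0 \<le> r"
  shows "measure lborel (ball (c::'a::euclidean_space) r) = unit_ball_vol (real DIM('a)) * r ^ DIM('a)"
  using assms by (simp add: measure_def emeasure_ball)

lemma emeasure_bounded_eq:
  assumes "bounded F"
  shows "emeasure lborel (F \<inter> A) = ennreal (measure lborel (F \<inter> A))"
proof -
  have "bounded (F \<inter> A)" using assms by (rule bounded_subset) auto
  then have "emeasure lborel (F \<inter> A) < \<infinity>" by (rule emeasure_bounded_finite)
  then show ?thesis by (simp add: emeasure_eq_ennreal_measure)
qed

lemma weak_lower:
  fixes F :: "'a::euclidean_space set" and s \<kappa> :: real
  assumes F: "F \<in> sets borel" "bounded F"
    and s: "0 < s" and \<kappa>: "\<kappa> > 0" and ks: "\<kappa> * s \<le> 1/2"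
  obtains W where "open W"
    "W \<subseteq> \<Union>{ball c r | c r. 0 < r \<and> \<kappa> * s * measure lborel (ball c r) < measure lborel (F \<inter> ball c r)}"
    "emeasure lborel F \<le> ennreal (\<kappa> * s * 6 ^ DIM('a)) * emeasure lborel W"
proof -
  define n where "n = DIM('a)"
  define \<omega> where "\<omega> = unit_ball_vol (real DIM('a))"
  have \<omega>: "\<omega> > 0" unfolding \<omega>_def by simp
  have n1: "n \<ge> 1" unfolding n_def by (simp add: DIM_positive Suc_leI)
  define P where "P = (\<lambda>c r. 0 < r \<and> \<kappa> * s * measure lborel (ball c r) < measure lborel (F \<inter> ball (c::'a) r))"
  define V where "V \<equiv> \<Union>{ball c r | c r. 0 < r \<and> emeasure lborel (ball c r) < 2 * emeasure lborel (F \<inter> ball (c::'a) r)}"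
  have FV: "emeasure lborel (F - V) = 0" unfolding V_def by (rule density_half[OF F])
  define G where "G = F \<inter> V"
  define mF where "mF = measure lborel F"
  define X where "X = mF / (\<kappa> * s * \<omega>)"
  have X0: "X \<ge> 0" unfolding X_def mF_def using \<kappa> s \<omega> by simp
  define R where "R = (\<lambda>y. {r. \<exists>c. y \<in> ball c r \<and> P c r})"
  have Rbd: "r \<le> 1 + X" if rR: "r \<in> R y" for r y
  proof -
    obtain c where c: "y \<in> ball c r" "P c r" using rR unfolding R_def by blast
    have r0: "r > 0" using c unfolding P_def by auto
    have "\<kappa> * s * (\<omega> * r ^ n) < measure lborel (F \<inter> ball c r)"
      using c r0 unfolding P_def n_def \<omega>_def by (simp add: measure_ball_eq)
    also have "\<dots> \<le> mF" unfolding mF_def using F emeasure_bounded_finite[OF F(2)]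
      by (intro measure_mono_fmeasurable) (auto simp: fmeasurable_def)
    finally have lt: "\<kappa> * s * \<omega> * r ^ n < mF" by (simp add: mult.assoc)
    show ?thesis
    proof (cases "r \<le> 1")
      case False
      then have "r \<le> r ^ n" using n1
        by (metis less_eq_real_def not_le one_le_power power_increasing power_one_right)
      then have "\<kappa> * s * \<omega> * r \<le> \<kappa> * s * \<omega> * r ^ n" using \<kappa> s \<omega> by simp
      then have "\<kappa> * s * \<omega> * r < mF" using lt by linarith
      then have "r < X" unfolding X_def using \<kappa> s \<omega> by (simp add: field_simps)
      then show ?thesis by simp
    qed (use X0 in linarith)
  qed
  have Rne: "R y \<noteq> {}" if "y \<in> G" for y
  proof -
    from that obtain c r where cr: "0 < r" "y \<in> ball c r"
      "emeasure lborel (ball c r) < 2 * emeasure lborel (F \<inter> ball c r)"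
      unfolding G_def V_def by blast
    have e1: "emeasure lborel (ball c r) = ennreal (measure lborel (ball c r))"
      by (rule emeasure_eq_ennreal_measure) (use emeasure_lborel_ball_finite[of c r] in auto)
    have e2: "2 * ennreal (measure lborel (F \<inter> ball c r)) = ennreal (2 * measure lborel (F \<inter> ball c r))"
      by (simp add: ennreal_mult)
    have "ennreal (measure lborel (ball c r)) < ennreal (2 * measure lborel (F \<inter> ball c r))"
      using cr(3) unfolding e1 emeasure_bounded_eq[OF F(2)] e2 .
    then have "measure lborel (ball c r) < 2 * measure lborel (F \<inter> ball c r)"
      by (simp add: ennreal_less_iff)
    moreover have "\<kappa> * s * measure lborel (ball c r) \<le> (1/2) * measure lborel (ball c r)"
      using ks by (intro mult_right_mono) auto
    ultimately have "\<kappa> * s * measure lborel (ball c r) < measure lborel (F \<inter> ball c r)" by linarith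
    then have "P c r" unfolding P_def using cr(1) by simp
    then show ?thesis unfolding R_def using cr(2) by blast
  qed
  have bdd: "bdd_above (R y)" for y using Rbd by (meson bdd_aboveI)
  have good: "\<exists>p. y \<in> ball (fst p) (snd p) \<and> P (fst p) (snd p) \<and> Sup (R y) < 2 * snd p" if yG: "y \<in> G" for y
  proof -
    obtain r0 where r0: "r0 \<in> R y" using Rne[OF yG] by blast
    have "0 < r0" using r0 unfolding R_def P_def by auto
    also have "r0 \<le> Sup (R y)" using r0 bdd by (rule cSup_upper)
    finally have "Sup (R y) / 2 < Sup (R y)" by simp
    then obtain r where r: "r \<in> R y" "Sup (R y) / 2 < r" using less_cSupD[OF Rne[OF yG]] by blast
    then obtain c where "y \<in> ball c r" "P c r" unfolding R_def by blast
    then show ?thesis using r(2) by (intro exI[of _ "(c, r)"]) auto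
  qed
  then obtain p where p: "\<And>y. y \<in> G \<Longrightarrow> y \<in> ball (fst (p y)) (snd (p y)) \<and> P (fst (p y)) (snd (p y)) \<and> Sup (R y) < 2 * snd (p y)"
    by metis
  define cc where "cc = (\<lambda>y. fst (p y))"
  define rr where "rr = (\<lambda>y. snd (p y))"
  have rr: "0 < rr i \<and> rr i \<le> 1 + X" if "i \<in> G" for i
  proof -
    have "rr i \<in> R i" using p[OF that] unfolding R_def rr_def by blast
    then show ?thesis using Rbd[of "rr i" i] p[OF that] unfolding rr_def P_def by auto
  qed
  have Gcov: "G \<subseteq> (\<Union>i\<in>G. cball (cc i) (rr i))"
    using p unfolding cc_def rr_def by (force dest!: ball_subset_cball[THEN subsetD])
  obtain C where C: "countable C" "C \<subseteq> G"
     "pairwise (\<lambda>i j. disjnt (cball (cc i) (rr i)) (cball (cc j) (rr j))) C"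
     "G \<subseteq> (\<Union>i\<in>C. cball (cc i) (5 * rr i))"
    using Vitali_covering_lemma_cballs[OF Gcov rr] by blast
  define W where "W = (\<Union>i\<in>C. ball (cc i) (rr i))"
  show ?thesis
  proof
    show "open W" unfolding W_def by auto
    show "W \<subseteq> \<Union>{ball c r | c r. 0 < r \<and> \<kappa> * s * measure lborel (ball c r) < measure lborel (F \<inter> ball c r)}"
      unfolding W_def using p C(2) unfolding cc_def rr_def P_def by blast
    have Cb: "\<And>i. i \<in> C \<Longrightarrow> i \<in> G" using C(2) by blast
    have key: "emeasure lborel (F \<inter> cball (cc i) (5 * rr i)) \<le> ennreal (\<kappa> * s * 6 ^ DIM('a)) * emeasure lborel (ball (cc i) (rr i))"
      if iC: "i \<in> C" for i
    proof -
      have iG: "i \<in> G" using iC C(2) by blast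
      have pi: "i \<in> ball (cc i) (rr i)" "Sup (R i) < 2 * rr i" "0 < rr i"
        using p[OF iG] rr[OF iG] unfolding cc_def rr_def by auto
      have notR: "6 * rr i \<notin> R i"
      proof
        assume "6 * rr i \<in> R i"
        then have "6 * rr i \<le> Sup (R i)" using bdd by (rule cSup_upper)
        then show False using pi by linarith
      qed
      have inb: "i \<in> ball (cc i) (6 * rr i)" using pi by auto
      have notP: "\<not> P (cc i) (6 * rr i)" using notR inb unfolding R_def by blast
      then have le: "measure lborel (F \<inter> ball (cc i) (6 * rr i)) \<le> \<kappa> * s * measure lborel (ball (cc i) (6 * rr i))"
        using pi unfolding P_def by auto
      have "emeasure lborel (F \<inter> cball (cc i) (5 * rr i)) \<le> emeasure lborel (F \<inter> ball (cc i) (6 * rr i))"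
      proof (rule emeasure_mono)
        show "F \<inter> cball (cc i) (5 * rr i) \<subseteq> F \<inter> ball (cc i) (6 * rr i)"
          using pi(3) by (auto simp: subset_iff)
        show "F \<inter> ball (cc i) (6 * rr i) \<in> sets lborel" using F by auto
      qed
      also have "\<dots> = ennreal (measure lborel (F \<inter> ball (cc i) (6 * rr i)))"
        by (rule emeasure_bounded_eq[OF F(2)])
      also have "\<dots> \<le> ennreal (\<kappa> * s * measure lborel (ball (cc i) (6 * rr i)))"
        using le by (rule ennreal_leI)
      also have "measure lborel (ball (cc i) (6 * rr i)) = 6 ^ DIM('a) * measure lborel (ball (cc i) (rr i))"
        using pi(3) by (simp add: measure_ball_eq power_mult_distrib)
      also have "ennreal (\<kappa> * s * (6 ^ DIM('a) * measure lborel (ball (cc i) (rr i)))) =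
           ennreal (\<kappa> * s * 6 ^ DIM('a)) * ennreal (measure lborel (ball (cc i) (rr i)))"
        using \<kappa> s by (simp add: ennreal_mult[symmetric] mult.assoc)
      also have "ennreal (measure lborel (ball (cc i) (rr i))) = emeasure lborel (ball (cc i) (rr i))"
        by (rule emeasure_eq_ennreal_measure[symmetric]) (use emeasure_lborel_ball_finite[of "cc i" "rr i"] in auto)
      finally show ?thesis .
    qed
    have "open V" unfolding V_def by auto
    then have Vb: "V \<in> sets borel" by auto
    have "emeasure lborel F = emeasure lborel (G \<union> (F - V))"
      unfolding G_def by (metis Int_Diff_Un)
    also have "\<dots> \<le> emeasure lborel G + emeasure lborel (F - V)"
      using F Vb unfolding G_def by (intro emeasure_subadditive) auto
    also have "\<dots> = emeasure lborel G" using FV by simp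
    also have "\<dots> \<le> emeasure lborel (\<Union>i\<in>C. F \<inter> cball (cc i) (5 * rr i))"
    proof (rule emeasure_mono)
      show "G \<subseteq> (\<Union>i\<in>C. F \<inter> cball (cc i) (5 * rr i))" using C(4) unfolding G_def by blast
      have "(\<Union>i\<in>C. F \<inter> cball (cc i) (5 * rr i)) \<in> sets borel"
        using C(1) F by (intro sets.countable_UN'') auto
      then show "(\<Union>i\<in>C. F \<inter> cball (cc i) (5 * rr i)) \<in> sets lborel" by simp
    qed
    also have "\<dots> \<le> (\<integral>\<^sup>+i. emeasure lborel (F \<inter> cball (cc i) (5 * rr i)) \<partial>count_space C)"
      using F C(1) by (intro emeasure_UN_countable_le) auto
    also have "\<dots> \<le> (\<integral>\<^sup>+i. ennreal (\<kappa> * s * 6 ^ DIM('a)) * emeasure lborel (ball (cc i) (rr i)) \<partial>count_space C)"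
      using key by (intro nn_integral_mono) auto
    also have "\<dots> = ennreal (\<kappa> * s * 6 ^ DIM('a)) * (\<integral>\<^sup>+i. emeasure lborel (ball (cc i) (rr i)) \<partial>count_space C)"
      by (simp add: nn_integral_cmult)
    also have "(\<integral>\<^sup>+i. emeasure lborel (ball (cc i) (rr i)) \<partial>count_space C) = emeasure lborel W"
    proof -
      have "disjoint_family_on (\<lambda>i. ball (cc i) (rr i)) C"
        using C(3) unfolding disjoint_family_on_def pairwise_def disjnt_def
        by (meson ball_subset_cball disjoint_iff subsetD)
      then show ?thesis unfolding W_def using C(1) by (intro emeasure_UN_countable[symmetric]) auto
    qed
    finally show "emeasure lborel F \<le> ennreal (\<kappa> * s * 6 ^ DIM('a)) * emeasure lborel W" .
  qed
qed

lemma cube_measure: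
  fixes a :: "'a::euclidean_space"
  assumes "h > 0"
  shows "emeasure lborel (cbox a (a + h *\<^sub>R One)) = ennreal (h ^ DIM('a))"
proof -
  have "\<forall>b\<in>Basis. a \<bullet> b \<le> (a + h *\<^sub>R One) \<bullet> b" using assms by (simp add: inner_add_left)
  then have "emeasure lborel (cbox a (a + h *\<^sub>R One)) = (\<Prod>b\<in>(Basis::'a set). (a + h *\<^sub>R One - a) \<bullet> b)"
    by (simp add: emeasure_lborel_cbox_eq)
  also have "(\<Prod>b\<in>(Basis::'a set). (a + h *\<^sub>R One - a) \<bullet> b) = (\<Prod>b\<in>(Basis::'a set). h)" by (intro prod.cong) auto
  finally show ?thesis by simp
qed

lemma cube_in_cubes: "h > 0 \<Longrightarrow> cbox a (a + h *\<^sub>R One) \<in> cubes"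
  unfolding cubes_def by blast

lemma avg_le_max:
  assumes "Q \<in> cubes" "y \<in> Q"
  shows "(\<integral>\<^sup>+ z. f z * indicator Q z \<partial>lborel) / emeasure lborel Q \<le> maximal_op f y"
  unfolding maximal_op_def using assms by (intro SUP_upper) auto

lemma int_ind:
  assumes "E \<in> sets borel" "Q \<in> sets borel"
  shows "(\<integral>\<^sup>+ z. indicator E z * indicator Q z \<partial>lborel) = emeasure lborel (E \<inter> Q)"
proof -
  have "(\<integral>\<^sup>+ z. indicator E z * indicator Q z \<partial>lborel) = (\<integral>\<^sup>+ z. indicator (E \<inter> Q) z \<partial>lborel)"
    by (intro nn_integral_cong) (simp split: split_indicator)
  also have "\<dots> = emeasure lborel (E \<inter> Q)" using assms by simp
  finally show ?thesis .
qed

lemma ball_sub_cube: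
  fixes c :: "'a::euclidean_space"
  shows "ball c r \<subseteq> cbox (c - r *\<^sub>R One) ((c - r *\<^sub>R One) + (2 * r) *\<^sub>R One)"
proof
  fix y assume y: "y \<in> ball c r"
  show "y \<in> cbox (c - r *\<^sub>R One) ((c - r *\<^sub>R One) + (2 * r) *\<^sub>R One)"
    unfolding mem_box
  proof
    fix b :: 'a assume b: "b \<in> Basis"
    have "\<bar>(y - c) \<bullet> b\<bar> \<le> norm (y - c)" using b by (rule Basis_le_norm)
    also have "\<dots> < r" using y by (simp add: dist_norm norm_minus_commute)
    finally show "(c - r *\<^sub>R One) \<bullet> b \<le> y \<bullet> b \<and> y \<bullet> b \<le> (c - r *\<^sub>R One + (2 * r) *\<^sub>R One) \<bullet> b"
      using b by (auto simp: inner_diff_left inner_add_left abs_less_iff)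
  qed
qed

lemma ball_in_level:
  fixes E F :: "'a::euclidean_space set"
  assumes E: "E \<in> sets borel" and FE: "F \<subseteq> E" and s: "s > 0" and r: "r > 0"
    and \<kappa>: "\<kappa> = 2 ^ DIM('a) / unit_ball_vol (real DIM('a))"
    and P: "\<kappa> * s * measure lborel (ball c r) < measure lborel (F \<inter> ball c r)"
    and F: "F \<in> sets borel" "bounded F"
    and y: "y \<in> ball c r"
  shows "ennreal s < maximal_op (indicator E) y"
proof -
  define D where "D = cbox (c - r *\<^sub>R One) ((c - r *\<^sub>R One) + (2 * r) *\<^sub>R One)"
  have D: "D \<in> cubes" "y \<in> D" using r y ball_sub_cube[of c r] unfolding D_def
    by (auto intro!: cube_in_cubes)
  have Db: "D \<in> sets borel" unfolding D_def by auto
  have mD: "emeasure lborel D = ennreal ((2 * r) ^ DIM('a))" unfolding D_def using r by (intro cube_measure) simp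
  have "bounded D" unfolding D_def by simp
  then have fin: "emeasure lborel (E \<inter> D) = ennreal (measure lborel (E \<inter> D))"
    by (metis Int_commute emeasure_bounded_eq)
  have eq: "\<kappa> * s * measure lborel (ball c r) = s * (2 * r) ^ DIM('a)"
    using r unfolding \<kappa> by (simp add: measure_ball_eq power_mult_distrib less_imp_neq[OF unit_ball_vol_pos, symmetric])
  have mono: "measure lborel (F \<inter> ball c r) \<le> measure lborel (E \<inter> D)"
  proof (rule measure_mono_fmeasurable)
    show "F \<inter> ball c r \<subseteq> E \<inter> D" using FE ball_sub_cube[of c r] unfolding D_def by blast
    show "F \<inter> ball c r \<in> sets lborel" using F by auto
    show "E \<inter> D \<in> fmeasurable lborel" using E Db fin by (auto simp: fmeasurable_def)
  qed
  have lt: "s * (2 * r) ^ DIM('a) < measure lborel (E \<inter> D)" using P eq mono by linarith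
  have "ennreal s < ennreal (measure lborel (E \<inter> D) / (2 * r) ^ DIM('a))"
    using lt s r by (subst ennreal_less_iff) (auto simp: field_simps)
  also have "\<dots> = (\<integral>\<^sup>+ z. indicator E z * indicator D z \<partial>lborel) / emeasure lborel D"
    using r by (simp add: int_ind[OF E Db] fin mD divide_ennreal)
  also have "\<dots> \<le> maximal_op (indicator E) y" using D by (rule avg_le_max)
  finally show ?thesis .
qed

lemma ball_in_big:
  fixes F :: "'a::euclidean_space set"
  assumes FQ: "F \<subseteq> cbox q (q + h *\<^sub>R One)" and F: "F \<in> sets borel" "bounded F"
    and L: "L > 0" and mF: "measure lborel F \<le> t * L ^ DIM('a)" and t: "0 < t" "t \<le> s" and r: "r > 0"
    and \<kappa>: "\<kappa> = 2 ^ DIM('a) / unit_ball_vol (real DIM('a))"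
    and P: "\<kappa> * s * measure lborel (ball c r) < measure lborel (F \<inter> ball c r)"
  shows "ball c r \<subseteq> cbox (q - L *\<^sub>R One) ((q - L *\<^sub>R One) + (h + 2 * L) *\<^sub>R One)"
proof -
  have eq: "\<kappa> * s * measure lborel (ball c r) = s * (2 * r) ^ DIM('a)"
    using r unfolding \<kappa> by (simp add: measure_ball_eq power_mult_distrib less_imp_neq[OF unit_ball_vol_pos, symmetric])
  have "F \<inter> ball c r \<noteq> {}"
  proof
    assume "F \<inter> ball c r = {}"
    then have "measure lborel (F \<inter> ball c r) = 0" by simp
    moreover have "0 \<le> s * (2 * r) ^ DIM('a)" using t r by simp
    ultimately show False using P eq by linarith
  qed
  then obtain z where z: "z \<in> F" "z \<in> ball c r" by blast
  have mono: "measure lborel (F \<inter> ball c r) \<le> measure lborel F"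
    using F emeasure_bounded_finite[OF F(2)]
    by (intro measure_mono_fmeasurable) (auto simp: fmeasurable_def)
  have "s * (2 * r) ^ DIM('a) < t * L ^ DIM('a)" using P eq mono mF by linarith
  also have "\<dots> \<le> s * L ^ DIM('a)" using t L by (intro mult_right_mono) auto
  finally have "s * (2 * r) ^ DIM('a) < s * L ^ DIM('a)" .
  moreover have s0: "0 < s" using t by linarith
  ultimately have "(2 * r) ^ DIM('a) < L ^ DIM('a)" using mult_less_cancel_left_pos[OF s0] by blast
  then have rL: "2 * r < L" by (rule power_less_imp_less_base[OF _ less_imp_le[OF L]])
  show ?thesis
  proof
    fix y assume y: "y \<in> ball c r"
    show "y \<in> cbox (q - L *\<^sub>R One) ((q - L *\<^sub>R One) + (h + 2 * L) *\<^sub>R One)"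
      unfolding mem_box
    proof
      fix b :: 'a assume b: "b \<in> Basis"
      have "\<bar>(y - z) \<bullet> b\<bar> \<le> norm (y - z)" using b by (rule Basis_le_norm)
      also have "\<dots> \<le> dist y c + dist c z" by (metis dist_norm dist_triangle)
      also have "\<dots> < 2 * r" using y z(2) by (simp add: dist_commute)
      finally have yz: "\<bar>(y - z) \<bullet> b\<bar> < L" using rL by linarith
      have "z \<in> cbox q (q + h *\<^sub>R One)" using FQ z(1) by blast
      then have zb: "q \<bullet> b \<le> z \<bullet> b" "z \<bullet> b \<le> q \<bullet> b + h" using b
        unfolding mem_box by (auto simp: inner_add_left)
      show "(q - L *\<^sub>R One) \<bullet> b \<le> y \<bullet> b \<and> y \<bullet> b \<le> (q - L *\<^sub>R One + (h + 2 * L) *\<^sub>R One) \<bullet> b"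
        using b yz zb by (auto simp: inner_diff_left inner_add_left abs_less_iff)
    qed
  qed
qed

lemma geom2: "(\<Sum>k\<le>j. (2::real) ^ k) = 2 ^ (j + 1) - 1"
  by (induction j) auto

lemma layer_pointwise:
  fixes W :: "nat \<Rightarrow> 'a set" and f :: "'a \<Rightarrow> ennreal" and t :: real
  assumes W: "\<And>k y. k \<le> N \<Longrightarrow> y \<in> W k \<Longrightarrow> ennreal (2 ^ k * t) < f y \<and> y \<in> B" and t: "t > 0"
  shows "ennreal (\<Sum>k\<le>N. 2 ^ k * t / 2 * indicator (W k) y) \<le> indicator {z. ennreal t < f z} y * f y * indicator B y"
proof (cases "{k \<in> {..N}. y \<in> W k} = {}")
  case True
  then have "(\<Sum>k\<le>N. 2 ^ k * t / 2 * indicator (W k) y) = (\<Sum>k\<le>N. (0::real))"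
    by (intro sum.cong) auto
  then show ?thesis by simp
next
  case False
  define J where "J = {k \<in> {..N}. y \<in> W k}"
  define j where "j = Max J"
  have fJ: "finite J" unfolding J_def by simp
  have jJ: "j \<in> J" unfolding j_def using False fJ J_def by (intro Max_in) auto
  then have jN: "j \<le> N" and yW: "y \<in> W j" unfolding J_def by auto
  have fy: "ennreal (2 ^ j * t) < f y" and yB: "y \<in> B" using W[OF jN yW] by auto
  have "t \<le> 2 ^ j * t" using t by simp
  then have "ennreal t \<le> ennreal (2 ^ j * t)" by (rule ennreal_leI)
  then have yO: "ennreal t < f y" using fy by (rule le_less_trans)
  have "(\<Sum>k\<le>N. 2 ^ k * t / 2 * indicator (W k) y) \<le> (\<Sum>k\<le>N. if k \<le> j then 2 ^ k * t / 2 else 0)"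
  proof (rule sum_mono)
    fix k assume k: "k \<in> {..N}"
    show "2 ^ k * t / 2 * indicator (W k) y \<le> (if k \<le> j then 2 ^ k * t / 2 else 0)"
    proof (cases "y \<in> W k")
      case True
      then have "k \<in> J" using k unfolding J_def by auto
      then have "k \<le> j" unfolding j_def using fJ by simp
      then show ?thesis using True by simp
    qed (use t in simp)
  qed
  also have "\<dots> = (\<Sum>k\<le>j. 2 ^ k * t / 2)"
  proof -
    have setEq: "{..N} \<inter> {k. k \<le> j} = {..j}" using jN by auto
    have "(\<Sum>k\<in>{..N} \<inter> {k. k \<le> j}. 2 ^ k * t / 2) = (\<Sum>k\<le>N. if k \<le> j then 2 ^ k * t / 2 else 0)"
      by (subst sum.inter_restrict) auto
    then show ?thesis using setEq by simp
  qed
  also have "\<dots> = (\<Sum>k\<le>j. (2::real) ^ k) * t / 2" by (simp add: sum_distrib_right sum_divide_distrib)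
  also have "\<dots> = (2 ^ (j + 1) - 1) * t / 2" by (simp add: geom2)
  also have "\<dots> \<le> 2 ^ j * t" using t by (simp add: field_simps)
  finally have "ennreal (\<Sum>k\<le>N. 2 ^ k * t / 2 * indicator (W k) y) \<le> ennreal (2 ^ j * t)" by (rule ennreal_leI)
  also have "\<dots> \<le> f y" using fy by simp
  finally show ?thesis using yO yB by simp
qed

lemma int_layers:
  fixes W :: "nat \<Rightarrow> 'a::euclidean_space set"
  assumes W: "\<And>k. k \<le> N \<Longrightarrow> W k \<in> sets borel" and a: "\<And>k. a k \<ge> 0"
  shows "(\<integral>\<^sup>+ y. ennreal (\<Sum>k\<le>N. a k * indicator (W k) y) \<partial>lborel) = (\<Sum>k\<le>N. ennreal (a k) * emeasure lborel (W k))"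
proof -
  have "(\<integral>\<^sup>+ y. ennreal (\<Sum>k\<le>N. a k * indicator (W k) y) \<partial>lborel) = (\<integral>\<^sup>+ y. (\<Sum>k\<le>N. ennreal (a k) * indicator (W k) y) \<partial>lborel)"
    using a by (intro nn_integral_cong) (simp add: ennreal_mult ennreal_indicator)
  also have "\<dots> = (\<Sum>k\<le>N. (\<integral>\<^sup>+ y. ennreal (a k) * indicator (W k) y \<partial>lborel))"
    using W by (intro nn_integral_sum) auto
  also have "\<dots> = (\<Sum>k\<le>N. ennreal (a k) * emeasure lborel (W k))"
    using W by (intro sum.cong refl nn_integral_cmult_indicator) auto
  finally show ?thesis .
qed

theorem corollary2p3:
  shows "\<exists>c::real. c > 0 \<and>
    (\<forall>(E::'a::euclidean_space set) (t::real). E \<in> sets borel \<longrightarrow> 0 < t \<longrightarrow> t < 1 \<longrightarrow>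
      {x. maximal_op (indicator E) x > ennreal t} \<subseteq>
      {x. maximal_op (\<lambda>y. indicator {z. maximal_op (indicator E) z > ennreal t} y
                            * maximal_op (indicator E) y) x
            > ennreal (c * t * (1 - ln t))})"
proof -
  define \<omega> where "\<omega> = unit_ball_vol (real DIM('a))"
  define \<kappa> where "\<kappa> = 2 ^ DIM('a) / \<omega>"
  define s0 where "s0 = 1 / (2 * \<kappa>)"
  define D where "D = 1 + \<bar>ln s0\<bar> + ln 2"
  define K where "K = 1 + 2 * \<kappa> * 18 ^ DIM('a)"
  define c where "c = 1 / (2 * D * K)"
  have \<omega>: "\<omega> > 0" unfolding \<omega>_def by simp
  have \<kappa>: "\<kappa> > 0" unfolding \<kappa>_def using \<omega> by simp
  have s0: "s0 > 0" unfolding s0_def using \<kappa> by simp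
  have D: "D > 0" unfolding D_def by (simp add: add_pos_nonneg)
  have K0: "0 < 2 * \<kappa> * 18 ^ DIM('a)" using \<kappa> by simp
  have K: "K > 0" "2 * \<kappa> * 18 ^ DIM('a) < K" unfolding K_def using K0 by linarith+
  have c: "c > 0" unfolding c_def using D K by simp
  have cD: "c * D * K = 1 / 2"
    unfolding c_def using D K by simp
  show ?thesis
  proof (intro exI[of _ c] conjI allI impI subsetI)
    show "c > 0" by (rule c)
    fix E :: "'a set" and t :: real and x
    assume E: "E \<in> sets borel" and t: "0 < t" "t < 1" and x: "x \<in> {x. ennreal t < maximal_op (indicator E) x}"
    define g where "g = (\<lambda>y. indicator {z. maximal_op (indicator E) z > ennreal t} y * maximal_op (indicator E) y)"
    have "ennreal (c * t * (1 - ln t)) < maximal_op g x"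
    proof -
    define f where "f = maximal_op (indicator E)"
    have "ennreal t < (SUP Q \<in> {Q \<in> cubes. x \<in> Q}. (\<integral>\<^sup>+ y. indicator E y * indicator Q y \<partial>lborel) / emeasure lborel Q)"
      using x unfolding maximal_op_def by simp
    then obtain Q where Q: "Q \<in> cubes" "x \<in> Q" "ennreal t < (\<integral>\<^sup>+ y. indicator E y * indicator Q y \<partial>lborel) / emeasure lborel Q"
      by (auto simp: less_SUP_iff)
    obtain q h where qh: "Q = cbox q (q + h *\<^sub>R One)" "h > 0" using Q(1) unfolding cubes_def by blast
    have Qb: "Q \<in> sets borel" unfolding qh by simp
    define F where "F = E \<inter> Q"
    have Fb: "F \<in> sets borel" unfolding F_def using E Qb by auto
    have Fbd: "bounded F" unfolding F_def qh by (simp add: bounded_Int)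
    define mr where "mr = measure lborel F"
    have eF: "emeasure lborel F = ennreal mr"
      unfolding mr_def using emeasure_bounded_eq[OF Fbd, of UNIV] by simp
    have eQ: "emeasure lborel Q = ennreal (h ^ DIM('a))" unfolding qh using qh(2) by (rule cube_measure)
    have avgQ: "(\<integral>\<^sup>+ y. indicator E y * indicator Q y \<partial>lborel) / emeasure lborel Q = ennreal (mr / h ^ DIM('a))"
      using qh(2) by (simp add: int_ind[OF E Qb] eQ eF[unfolded F_def] divide_ennreal mr_def F_def)
    have tmr: "t < mr / h ^ DIM('a)" using Q(3) t unfolding avgQ by (simp add: ennreal_less_iff)
    then have tmr2: "t * h ^ DIM('a) < mr" using qh(2) by (simp add: field_simps)
    have fQ: "ennreal t < f y" if "y \<in> Q" for y
      using Q(3) avg_le_max[OF Q(1) that, of "indicator E"] unfolding f_def by simp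
    show "ennreal (c * t * (1 - ln t)) < maximal_op g x"
    proof (cases "t \<le> s0")
      case False
      have gQ: "ennreal t * indicator Q y \<le> g y * indicator Q y" for y
      proof (cases "y \<in> Q")
        case True
        then have "g y = f y" using fQ[OF True] unfolding g_def f_def by simp
        then show ?thesis using fQ[OF True] True by simp
      qed simp
      have "ennreal t * ennreal (h ^ DIM('a)) = (\<integral>\<^sup>+ y. ennreal t * indicator Q y \<partial>lborel)"
        using Qb by (simp add: nn_integral_cmult_indicator eQ)
      also have "\<dots> \<le> (\<integral>\<^sup>+ y. g y * indicator Q y \<partial>lborel)" by (intro nn_integral_mono gQ)
      finally have "ennreal t * ennreal (h ^ DIM('a)) / emeasure lborel Q \<le> (\<integral>\<^sup>+ y. g y * indicator Q y \<partial>lborel) / emeasure lborel Q"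
        by (rule divide_right_mono_ennreal)
      also have "\<dots> \<le> maximal_op g x" using Q(1,2) by (rule avg_le_max)
      also have "ennreal t * ennreal (h ^ DIM('a)) / emeasure lborel Q = ennreal t"
        using qh(2) t by (simp add: eQ ennreal_mult[symmetric] divide_ennreal)
      finally have tg: "ennreal t \<le> maximal_op g x" .
      have "ln s0 < ln t" using False s0 t by simp
      then have lnD: "1 - ln t \<le> D" unfolding D_def using ln_gt_zero[of 2] by linarith
      have "ln t < 0" using t by simp
      then have "0 < 1 - ln t" by simp
      have cD1: "c * D < 1"
      proof (rule ccontr)
        assume "\<not> c * D < 1"
        then have "1 * K \<le> c * D * K" using K by (intro mult_right_mono) auto
        moreover have "K > 1" unfolding K_def using K0 by linarith
        ultimately show False using cD by linarith
      qed
      have "c * t * (1 - ln t) \<le> c * t * D" using lnD c t by (intro mult_left_mono) auto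
      also have "\<dots> < t" using cD1 t by (simp add: mult.commute mult.left_commute)
      finally have "c * t * (1 - ln t) < t" .
      then have "ennreal (c * t * (1 - ln t)) < ennreal t"
        using c t \<open>0 < 1 - ln t\<close> by (subst ennreal_less_iff) auto
      then show ?thesis using tg by (rule less_le_trans)
    next
      case True
      have mrpos: "mr > 0" using tmr2 t qh(2) by (smt (verit) mult_pos_pos zero_less_power)
      have n0: "0 < DIM('a)" by (rule DIM_positive)
      define L where "L = root DIM('a) (mr / t)"
      have L: "L > 0" unfolding L_def using n0 mrpos t by (intro real_root_gt_zero) auto
      have Ln: "L ^ DIM('a) = mr / t" unfolding L_def using n0 mrpos t by (intro real_root_pow_pos2) auto
      have "h ^ DIM('a) < L ^ DIM('a)" unfolding Ln using tmr2 t by (simp add: field_simps)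
      then have hL: "h < L" by (rule power_less_imp_less_base[OF _ less_imp_le[OF L]])
      have mF: "measure lborel F \<le> t * L ^ DIM('a)" unfolding Ln mr_def[symmetric] using t by simp
      define B where "B = cbox (q - L *\<^sub>R One) ((q - L *\<^sub>R One) + (h + 2 * L) *\<^sub>R One)"
      have Bc: "B \<in> cubes" unfolding B_def using L qh(2) by (intro cube_in_cubes) simp
      have Bb: "B \<in> sets borel" unfolding B_def by simp
      have QB: "Q \<subseteq> B"
      proof
        fix z assume "z \<in> Q"
        then have zb: "\<forall>b\<in>Basis. q \<bullet> b \<le> z \<bullet> b \<and> z \<bullet> b \<le> q \<bullet> b + h"
          unfolding qh mem_box by (auto simp: inner_add_left)
        show "z \<in> B" unfolding B_def mem_box
          using zb L by (auto simp: inner_diff_left inner_add_left)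
      qed
      have xB: "x \<in> B" using QB Q(2) by blast
      have eB: "emeasure lborel B = ennreal ((h + 2 * L) ^ DIM('a))"
        unfolding B_def using L qh(2) by (intro cube_measure) simp
      have B3: "(h + 2 * L) ^ DIM('a) \<le> 3 ^ DIM('a) * (mr / t)"
      proof -
        have "(h + 2 * L) ^ DIM('a) \<le> (3 * L) ^ DIM('a)" using hL qh(2) by (intro power_mono) auto
        also have "\<dots> = 3 ^ DIM('a) * (mr / t)" by (simp add: power_mult_distrib Ln)
        finally show ?thesis .
      qed
      define N where "N = nat \<lfloor>log 2 (s0 / t)\<rfloor>"
      have st1: "1 \<le> s0 / t" using True t by simp
      have lg0: "0 \<le> log 2 (s0 / t)" using st1 by simp
      have rN: "real N = real_of_int \<lfloor>log 2 (s0 / t)\<rfloor>" unfolding N_def using lg0 by simp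
      have N1: "real N \<le> log 2 (s0 / t)" unfolding rN by simp
      have N2: "log 2 (s0 / t) < real N + 1" unfolding rN by linarith
      have pN: "2 ^ N * t \<le> s0"
      proof -
        have "(2::real) ^ N = 2 powr real N" by (simp add: powr_realpow)
        also have "\<dots> \<le> 2 powr (log 2 (s0 / t))" using N1 by (intro powr_mono) auto
        also have "\<dots> = s0 / t" using st1 by simp
        finally show ?thesis using t by (simp add: field_simps)
      qed
      have lnN: "ln (s0 / t) < (real N + 1) * ln 2"
      proof -
        have "ln (s0 / t) = log 2 (s0 / t) * ln 2" by (simp add: log_def)
        also have "\<dots> < (real N + 1) * ln 2" using N2 by (intro mult_strict_right_mono) auto
        finally show ?thesis .
      qed
      have ks0: "\<kappa> * s0 = 1 / 2" unfolding s0_def using \<kappa> by simp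
      have lev: "\<exists>Wk. k \<le> N \<longrightarrow> (open Wk \<and>
          Wk \<subseteq> \<Union>{ball c r | c r. 0 < r \<and> \<kappa> * (2 ^ k * t) * measure lborel (ball c r) < measure lborel (F \<inter> ball c r)} \<and>
          emeasure lborel F \<le> ennreal (\<kappa> * (2 ^ k * t) * 6 ^ DIM('a)) * emeasure lborel Wk)" for k
      proof (cases "k \<le> N")
        case True
        have "(2::real) ^ k \<le> 2 ^ N" using True by (intro power_increasing) auto
        then have "2 ^ k * t \<le> 2 ^ N * t" using t by (intro mult_right_mono) auto
        then have "2 ^ k * t \<le> s0" using pN by linarith
        then have "\<kappa> * (2 ^ k * t) \<le> \<kappa> * s0" using \<kappa> by (intro mult_left_mono) auto
        then have kle: "\<kappa> * (2 ^ k * t) \<le> 1 / 2" using ks0 by linarith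
        have spos: "0 < 2 ^ k * t" using t by simp
        obtain Wk where Wk: "open Wk"
          "Wk \<subseteq> \<Union>{ball c r | c r. 0 < r \<and> \<kappa> * (2 ^ k * t) * measure lborel (ball c r) < measure lborel (F \<inter> ball c r)}"
          "emeasure lborel F \<le> ennreal (\<kappa> * (2 ^ k * t) * 6 ^ DIM('a)) * emeasure lborel Wk"
          by (rule weak_lower[OF Fb Fbd spos \<kappa> kle])
        show ?thesis by (rule exI[of _ Wk]) (intro impI conjI Wk)
      next
        case False
        then show ?thesis by (intro exI[of _ "{}"]) (simp only: simp_thms)
      qed
      have lev': "\<forall>k. \<exists>Wk. k \<le> N \<longrightarrow> (open Wk \<and>
          Wk \<subseteq> \<Union>{ball c r | c r. 0 < r \<and> \<kappa> * (2 ^ k * t) * measure lborel (ball c r) < measure lborel (F \<inter> ball c r)} \<and>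
          emeasure lborel F \<le> ennreal (\<kappa> * (2 ^ k * t) * 6 ^ DIM('a)) * emeasure lborel Wk)"
        by (rule allI, rule lev)
      then have "\<exists>W. \<forall>k. k \<le> N \<longrightarrow> (open (W k) \<and>
          W k \<subseteq> \<Union>{ball c r | c r. 0 < r \<and> \<kappa> * (2 ^ k * t) * measure lborel (ball c r) < measure lborel (F \<inter> ball c r)} \<and>
          emeasure lborel F \<le> ennreal (\<kappa> * (2 ^ k * t) * 6 ^ DIM('a)) * emeasure lborel (W k))"
        by (rule choice)
      then obtain W where W0: "\<forall>k. k \<le> N \<longrightarrow> (open (W k) \<and>
          W k \<subseteq> \<Union>{ball c r | c r. 0 < r \<and> \<kappa> * (2 ^ k * t) * measure lborel (ball c r) < measure lborel (F \<inter> ball c r)} \<and>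
          emeasure lborel F \<le> ennreal (\<kappa> * (2 ^ k * t) * 6 ^ DIM('a)) * emeasure lborel (W k))" ..
      note W = W0[rule_format]
      have FE: "F \<subseteq> E" unfolding F_def by blast
      have FQ: "F \<subseteq> cbox q (q + h *\<^sub>R One)" unfolding F_def qh by blast
      have \<kappa>': "\<kappa> = 2 ^ DIM('a) / unit_ball_vol (real DIM('a))" unfolding \<kappa>_def \<omega>_def ..
      have Wp: "ennreal (2 ^ k * t) < f y \<and> y \<in> B" if k: "k \<le> N" and y: "y \<in> W k" for k y
      proof -
        obtain c r where cr: "y \<in> ball c r" "0 < r"
          "\<kappa> * (2 ^ k * t) * measure lborel (ball c r) < measure lborel (F \<inter> ball c r)"
          using W[OF k] y by blast
        have "ennreal (2 ^ k * t) < f y" unfolding f_def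
          using ball_in_level[OF E FE _ cr(2) \<kappa>' cr(3) Fb Fbd cr(1)] t by simp
        moreover have "ball c r \<subseteq> B" unfolding B_def
          using ball_in_big[OF FQ Fb Fbd L mF t(1) _ cr(2) \<kappa>' cr(3)] t by simp
        ultimately show ?thesis using cr(1) by blast
      qed
      define \<phi> where "\<phi> = (\<lambda>y. \<Sum>k\<le>N. 2 ^ k * t / 2 * indicator (W k) y)"
      have pw: "ennreal (\<phi> y) \<le> g y * indicator B y" for y
      proof -
        have "ennreal (\<phi> y) \<le> indicator {z. ennreal t < f z} y * f y * indicator B y"
          unfolding \<phi>_def by (rule layer_pointwise[OF Wp t(1)])
        then show ?thesis unfolding g_def f_def by simp
      qed
      define I where "I = real (N + 1) * (mr / (2 * \<kappa> * 6 ^ DIM('a)))"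
      have trm: "ennreal (mr / (2 * \<kappa> * 6 ^ DIM('a))) \<le> ennreal (2 ^ k * t / 2) * emeasure lborel (W k)"
        if k: "k \<le> N" for k
      proof -
        have "ennreal (mr / (2 * \<kappa> * 6 ^ DIM('a))) = ennreal (1 / (2 * \<kappa> * 6 ^ DIM('a))) * emeasure lborel F"
          using \<kappa> mrpos by (simp add: eF ennreal_mult[symmetric])
        also have "\<dots> \<le> ennreal (1 / (2 * \<kappa> * 6 ^ DIM('a))) * (ennreal (\<kappa> * (2 ^ k * t) * 6 ^ DIM('a)) * emeasure lborel (W k))"
          using W[OF k] by (intro mult_left_mono) auto
        also have "\<dots> = (ennreal (1 / (2 * \<kappa> * 6 ^ DIM('a))) * ennreal (\<kappa> * (2 ^ k * t) * 6 ^ DIM('a))) * emeasure lborel (W k)"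
          by (simp only: mult.assoc)
        also have "ennreal (1 / (2 * \<kappa> * 6 ^ DIM('a))) * ennreal (\<kappa> * (2 ^ k * t) * 6 ^ DIM('a)) =
            ennreal (1 / (2 * \<kappa> * 6 ^ DIM('a)) * (\<kappa> * (2 ^ k * t) * 6 ^ DIM('a)))"
          by (rule ennreal_mult[symmetric]) (use \<kappa> t in auto)
        also have "1 / (2 * \<kappa> * 6 ^ DIM('a)) * (\<kappa> * (2 ^ k * t) * 6 ^ DIM('a)) = 2 ^ k * t / 2"
          using \<kappa> by (simp add: field_simps)
        finally show ?thesis .
      qed
      have aa: "0 \<le> mr / (2 * \<kappa> * 6 ^ DIM('a))" using \<kappa> mrpos by simp
      have "(\<Sum>k\<le>N. ennreal (mr / (2 * \<kappa> * 6 ^ DIM('a)))) = ennreal (\<Sum>k\<le>N. mr / (2 * \<kappa> * 6 ^ DIM('a)))"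
        by (rule sum_ennreal) (use aa in simp)
      also have "(\<Sum>k\<le>N. mr / (2 * \<kappa> * 6 ^ DIM('a))) = I" unfolding I_def by simp
      finally have "ennreal I = (\<Sum>k\<le>N. ennreal (mr / (2 * \<kappa> * 6 ^ DIM('a))))" by simp
      also have "\<dots> \<le> (\<Sum>k\<le>N. ennreal (2 ^ k * t / 2) * emeasure lborel (W k))"
        using trm by (intro sum_mono) auto
      also have "\<dots> = (\<integral>\<^sup>+ y. ennreal (\<phi> y) \<partial>lborel)"
        unfolding \<phi>_def using W t by (intro int_layers[symmetric]) auto
      also have "\<dots> \<le> (\<integral>\<^sup>+ y. g y * indicator B y \<partial>lborel)" by (intro nn_integral_mono pw)
      finally have "ennreal I / emeasure lborel B \<le> (\<integral>\<^sup>+ y. g y * indicator B y \<partial>lborel) / emeasure lborel B"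
        by (rule divide_right_mono_ennreal)
      also have "\<dots> \<le> maximal_op g x" using Bc xB by (rule avg_le_max)
      also have "ennreal I / emeasure lborel B = ennreal (I / (h + 2 * L) ^ DIM('a))"
        unfolding eB using L qh(2) I_def \<kappa> mrpos by (intro divide_ennreal) auto
      finally have Ig: "ennreal (I / (h + 2 * L) ^ DIM('a)) \<le> maximal_op g x" .
      have I0: "I > 0" unfolding I_def using \<kappa> mrpos by simp
      have "I / (3 ^ DIM('a) * (mr / t)) \<le> I / (h + 2 * L) ^ DIM('a)"
        using B3 I0 L qh(2) mrpos t by (intro divide_left_mono) auto
      also have "I / (3 ^ DIM('a) * (mr / t)) = real (N + 1) * t / (2 * \<kappa> * 18 ^ DIM('a))"
      proof -
        have "(18::real) ^ DIM('a) = 3 ^ DIM('a) * 6 ^ DIM('a)" by (simp add: power_mult_distrib[symmetric])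
        then show ?thesis unfolding I_def using mrpos t \<kappa> by (simp add: field_simps)
      qed
      finally have Y: "real (N + 1) * t / (2 * \<kappa> * 18 ^ DIM('a)) \<le> I / (h + 2 * L) ^ DIM('a)" .
      have lnD: "1 - ln t \<le> real (N + 1) * D"
      proof -
        have "ln (s0 / t) = ln s0 - ln t" using s0 t by (simp add: ln_div)
        moreover have "real (N + 1) * ln 2 = (real N + 1) * ln 2" by simp
        moreover have "- ln s0 \<le> \<bar>ln s0\<bar>" by simp
        ultimately have "1 - ln t \<le> 1 + \<bar>ln s0\<bar> + real (N + 1) * ln 2" using lnN by linarith
        also have "\<dots> \<le> real (N + 1) * (1 + \<bar>ln s0\<bar>) + real (N + 1) * ln 2"
          by (simp add: algebra_simps)
        also have "\<dots> = real (N + 1) * D" unfolding D_def by (simp add: algebra_simps)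
        finally show ?thesis .
      qed
      have "c * t * (1 - ln t) \<le> c * t * (real (N + 1) * D)" using lnD c t by (intro mult_left_mono) auto
      also have "\<dots> = real (N + 1) * t / (2 * K)"
      proof -
        have cDK: "c * D = 1 / (2 * K)" using cD K by (simp add: field_simps)
        have "c * t * (real (N + 1) * D) = (c * D) * (real (N + 1) * t)" by (simp only: ac_simps)
        also have "\<dots> = real (N + 1) * t / (2 * K)" unfolding cDK by simp
        finally show ?thesis .
      qed
      also have "\<dots> < real (N + 1) * t / (2 * \<kappa> * 18 ^ DIM('a))"
        using K K0 t by (intro divide_strict_left_mono) auto
      finally have lt: "c * t * (1 - ln t) < real (N + 1) * t / (2 * \<kappa> * 18 ^ DIM('a))" .
      have "ln t < 0" using t by simp
      then have "0 \<le> 1 - ln t" by simp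
      then have "0 \<le> c * t * (1 - ln t)" using c t by simp
      then have "ennreal (c * t * (1 - ln t)) < ennreal (real (N + 1) * t / (2 * \<kappa> * 18 ^ DIM('a)))"
        using lt by (subst ennreal_less_iff) auto
      also have "\<dots> \<le> ennreal (I / (h + 2 * L) ^ DIM('a))" using Y by (rule ennreal_leI)
      finally show ?thesis using Ig by (rule less_le_trans)
    qed
    qed
    then show "x \<in> {x. maximal_op (\<lambda>y. indicator {z. maximal_op (indicator E) z > ennreal t} y
                            * maximal_op (indicator E) y) x > ennreal (c * t * (1 - ln t))}"
      unfolding g_def by simp
  qed
qed

end
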